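(* Let $\Omega=\{1,\dots,m\}^{\mathbb{N}}$ with shift $\sigma$, let $\mathcal{M}$ be the set of Borel probabilities on $\Omega$ with the Monge–Kantorovich metric $d_{MK}$, and let $\mathfrak{T}:\mathcal{M}\to\mathcal{M}$ be the push-forward map $\mathfrak{T}(\mu)(E)=\mu(\sigma^{-1}(E))$. Then there exists $\mu\in\mathcal{M}$ whose forward orbit $\{\mathfrak{T}^n(\mu):n\ge 0\}$ is dense in $\mathcal{M}$.
   Context: $\Omega$ carries the metric $d_\Omega(\alpha,\beta)=2^{-k}$ with $k=\min\{i:\alpha_i\neq\beta_i\}$ (and $0$ if $\alpha=\beta$); $d_{MK}(\mu,\nu)=\sup\{\int f\,d\mu-\int f\,d\nu : f \text{ 1-Lipschitz}\}$. $\sigma(x_1,x_2,\dots)=(x_2,x_3,\dots)$. *)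

theory Defs
  imports "HOL-Probability.Probability"
begin

definition Omega :: "nat \<Rightarrow> (nat \<Rightarrow> nat) set" where
  "Omega m = {x. \<forall>i. x i \<in> {1..m}}"

definition d_Omega :: "(nat \<Rightarrow> nat) \<Rightarrow> (nat \<Rightarrow> nat) \<Rightarrow> real" where
  "d_Omega x y = (if x = y then 0 else (1/2) ^ (LEAST i. x i \<noteq> y i))"

definition Omega_open :: "nat \<Rightarrow> (nat \<Rightarrow> nat) set \<Rightarrow> bool" where
  "Omega_open m U \<longleftrightarrow> U \<subseteq> Omega m \<and>
     (\<forall>x\<in>U. \<exists>e>0. \<forall>y\<in>Omega m. d_Omega x y < e \<longrightarrow> y \<in> U)"

definition Omega_borel :: "nat \<Rightarrow> (nat \<Rightarrow> nat) measure" where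
  "Omega_borel m = sigma (Omega m) {U. Omega_open m U}"

definition Prob_Omega :: "nat \<Rightarrow> (nat \<Rightarrow> nat) measure set" where
  "Prob_Omega m = {\<mu>. prob_space \<mu> \<and> sets \<mu> = sets (Omega_borel m)}"

definition shift :: "(nat \<Rightarrow> nat) \<Rightarrow> (nat \<Rightarrow> nat)" where
  "shift x = (\<lambda>i. x (Suc i))"

definition T_push :: "nat \<Rightarrow> (nat \<Rightarrow> nat) measure \<Rightarrow> (nat \<Rightarrow> nat) measure" where
  "T_push m \<mu> = distr \<mu> (Omega_borel m) shift"

definition lip1 :: "nat \<Rightarrow> ((nat \<Rightarrow> nat) \<Rightarrow> real) \<Rightarrow> bool" where
  "lip1 m f \<longleftrightarrow> (\<forall>x\<in>Omega m. \<forall>y\<in>Omega m. \<bar>f x - f y\<bar> \<le> d_Omega x y)"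

definition d_MK :: "nat \<Rightarrow> (nat \<Rightarrow> nat) measure \<Rightarrow> (nat \<Rightarrow> nat) measure \<Rightarrow> real" where
  "d_MK m \<mu> \<nu> = Sup {(\<integral>x. f x \<partial>\<mu>) - (\<integral>x. f x \<partial>\<nu>) | f. lip1 m f}"

end

theory Submission
  imports Defs "HOL-Library.Discrete_Functions"
begin


lemma d_agree:
  assumes "\<forall>i<L. x i = y i"
  shows "d_Omega x y \<le> (1/2)^L"
proof (cases "x = y")
  case True then show ?thesis by (simp add: d_Omega_def)
next
  case False
  then obtain j where "x j \<noteq> y j" by auto
  have "L \<le> (LEAST i. x i \<noteq> y i)"
  proof (rule ccontr)
    assume "\<not> ?thesis"
    then have "(LEAST i. x i \<noteq> y i) < L" by simp
    moreover have "x (LEAST i. x i \<noteq> y i) \<noteq> y (LEAST i. x i \<noteq> y i)"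
      by (rule LeastI[of _ j]) fact
    ultimately show False using assms by auto
  qed
  then show ?thesis using False by (simp add: d_Omega_def power_decreasing)
qed

lemma d_nonneg: "d_Omega x y \<ge> 0" by (simp add: d_Omega_def)

lemma d_le1: "d_Omega x y \<le> 1"
  using d_agree[of 0 x y] by simp

lemma d_coord:
  assumes "d_Omega x y < (1/2)^j"
  shows "x j = y j"
proof (rule ccontr)
  assume ne: "x j \<noteq> y j"
  then have xy: "x \<noteq> y" by auto
  have "(LEAST i. x i \<noteq> y i) \<le> j" using ne by (rule Least_le)
  then have "(1/2::real)^j \<le> (1/2)^(LEAST i. x i \<noteq> y i)"
    by (simp add: power_decreasing)
  then show False using assms xy by (simp add: d_Omega_def)
qed

lemma open_sub: "{U. Omega_open m U} \<subseteq> Pow (Omega m)"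
  by (auto simp: Omega_open_def)

lemma space_OB[simp]: "space (Omega_borel m) = Omega m"
  unfolding Omega_borel_def by (rule space_measure_of_conv)

lemma sets_OB: "sets (Omega_borel m) = sigma_sets (Omega m) {U. Omega_open m U}"
  unfolding Omega_borel_def using open_sub by (rule sets_measure_of)

lemma coord_open: "Omega_open m {x\<in>Omega m. x j = a}"
  unfolding Omega_open_def
proof (intro conjI ballI)
  fix x assume x: "x \<in> {x\<in>Omega m. x j = a}"
  show "\<exists>e>0. \<forall>y\<in>Omega m. d_Omega x y < e \<longrightarrow> y \<in> {x \<in> Omega m. x j = a}"
    using x d_coord[of x _ j] by (intro exI[of _ "(1/2)^j"]) auto
qed auto

lemma coord_sets: "{x\<in>Omega m. x j = a} \<in> sets (Omega_borel m)"
  unfolding sets_OB using coord_open by auto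

definition cyl :: "nat \<Rightarrow> nat list \<Rightarrow> (nat \<Rightarrow> nat) set" where
  "cyl m w = {x\<in>Omega m. \<forall>i<length w. x i = w ! i}"

lemma preimage_cyl:
  assumes Y: "Y \<in> space M \<rightarrow> Omega m"
    and c: "\<And>i a. {\<omega>\<in>space M. Y \<omega> i = a} \<in> sets M"
  shows "Y -` cyl m w \<inter> space M \<in> sets M"
proof -
  have "Y -` cyl m w \<inter> space M = {\<omega>\<in>space M. \<forall>i\<in>{..<length w}. Y \<omega> i = w ! i}"
    using Y by (auto simp: cyl_def)
  also have "\<dots> \<in> sets M"
    using c by (intro sets.sets_Collect_finite_All) auto
  finally show ?thesis .
qed

lemma meas_crit:
  assumes Y: "Y \<in> space M \<rightarrow> Omega m"
    and c: "\<And>i a. {\<omega>\<in>space M. Y \<omega> i = a} \<in> sets M"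
  shows "Y \<in> measurable M (Omega_borel m)"
  unfolding Omega_borel_def
proof (rule measurable_measure_of[OF open_sub Y])
  fix U assume "U \<in> {U. Omega_open m U}"
  then have U: "Omega_open m U" by simp
  let ?I = "{w. cyl m w \<subseteq> U}"
  have "Y -` U \<inter> space M = (\<Union>w\<in>?I. Y -` cyl m w \<inter> space M)"
  proof
    show "Y -` U \<inter> space M \<subseteq> (\<Union>w\<in>?I. Y -` cyl m w \<inter> space M)"
    proof
      fix \<omega> assume om: "\<omega> \<in> Y -` U \<inter> space M"
      then have YU: "Y \<omega> \<in> U" by auto
      then obtain e where e: "e > 0" "\<forall>y\<in>Omega m. d_Omega (Y \<omega>) y < e \<longrightarrow> y \<in> U"
        using U unfolding Omega_open_def by blast
      obtain L where L: "(1/2::real)^L < e" using real_arch_pow_inv[of e "1/2"] e by auto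
      let ?w = "map (Y \<omega>) [0..<L]"
      have "cyl m ?w \<subseteq> U"
      proof
        fix y assume "y \<in> cyl m ?w"
        then have y: "y \<in> Omega m" "\<forall>i<L. Y \<omega> i = y i" by (auto simp: cyl_def)
        then have "d_Omega (Y \<omega>) y \<le> (1/2)^L" by (intro d_agree) auto
        then show "y \<in> U" using e y L by auto
      qed
      moreover have "\<omega> \<in> Y -` cyl m ?w \<inter> space M" using om Y by (auto simp: cyl_def)
      ultimately show "\<omega> \<in> (\<Union>w\<in>?I. Y -` cyl m w \<inter> space M)" by blast
    qed
  qed auto
  also have "\<dots> \<in> sets M"
    by (intro sets.countable_UN'') (auto intro: preimage_cyl[OF Y c])
  finally show "Y -` U \<inter> space M \<in> sets M" .
qed

lemma cyl_sets: "cyl m w \<in> sets (Omega_borel m)"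
proof -
  have "cyl m w \<inter> Omega m = cyl m w" by (auto simp: cyl_def)
  then show ?thesis using preimage_cyl[of id "Omega_borel m" m w] coord_sets by auto
qed

lemma shift_meas: "shift \<in> measurable (Omega_borel m) (Omega_borel m)"
proof (rule meas_crit)
  show "shift \<in> space (Omega_borel m) \<rightarrow> Omega m" by (auto simp: shift_def Omega_def)
  fix i a
  have "{\<omega> \<in> space (Omega_borel m). shift \<omega> i = a} = {x\<in>Omega m. x (Suc i) = a}"
    by (auto simp: shift_def)
  then show "{\<omega> \<in> space (Omega_borel m). shift \<omega> i = a} \<in> sets (Omega_borel m)"
    using coord_sets by simp
qed



definition Wd :: "nat \<Rightarrow> nat \<Rightarrow> nat list set" where
  "Wd m L = {w. set w \<subseteq> {1..m} \<and> length w = L}"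

definition rep :: "nat list \<Rightarrow> nat \<Rightarrow> nat" where
  "rep w = (\<lambda>i. if i < length w then w ! i else 1)"

lemma finite_Wd: "finite (Wd m L)"
  unfolding Wd_def by (rule finite_lists_length_eq) simp

lemma pre_Wd: "x \<in> Omega m \<Longrightarrow> map x [0..<L] \<in> Wd m L"
  by (auto simp: Wd_def Omega_def)

lemma rep_Omega:
  assumes "m \<ge> 1" "set w \<subseteq> {1..m}" shows "rep w \<in> Omega m"
proof -
  have "rep w i \<in> {1..m}" for i
  proof (cases "i < length w")
    case True then have "w ! i \<in> set w" by simp
    then have "w ! i \<in> {1..m}" using assms by blast
    then show ?thesis using True by (simp add: rep_def)
  qed (use assms in \<open>auto simp: rep_def\<close>)
  then show ?thesis by (simp add: Omega_def)
qed

lemma rep_pre_agree: "\<forall>i<L. rep (map x [0..<L]) i = x i"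
  by (simp add: rep_def)

lemma ind_sum:
  assumes x: "x \<in> Omega m"
  shows "(\<Sum>w\<in>Wd m L. F w * indicator (cyl m w) x) = (F (map x [0..<L]) :: real)"
proof -
  have "(\<Sum>w\<in>Wd m L. F w * indicator (cyl m w) x) =
        (\<Sum>w\<in>Wd m L. if w = map x [0..<L] then F w else 0)"
  proof (rule sum.cong)
    fix w assume w: "w \<in> Wd m L"
    have lw: "length w = L" using w by (simp add: Wd_def)
    have "x \<in> cyl m w \<longleftrightarrow> w = map x [0..<L]"
    proof
      assume "x \<in> cyl m w" then show "w = map x [0..<L]"
        using lw by (auto simp: cyl_def intro: nth_equalityI)
    next
      assume e: "w = map x [0..<L]"
      have "\<forall>i<length w. x i = w ! i" using lw by (subst e) simp
      then show "x \<in> cyl m w" using x by (simp add: cyl_def)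
    qed
    then show "F w * indicator (cyl m w) x = (if w = map x [0..<L] then F w else 0)"
      by (auto simp: indicator_def)
  qed simp
  also have "\<dots> = F (map x [0..<L])"
    using pre_Wd[OF x, of L] finite_Wd[of m L] by (simp add: sum.delta')
  finally show ?thesis .
qed

lemma pre_meas:
  "(\<lambda>x. (F (map x [0..<L]) :: real)) \<in> borel_measurable (Omega_borel m)"
proof -
  have "(\<lambda>x. \<Sum>w\<in>Wd m L. F w * indicator (cyl m w) x) \<in> borel_measurable (Omega_borel m)"
    using cyl_sets by (intro borel_measurable_sum borel_measurable_times borel_measurable_indicator) auto
  then show ?thesis
    by (rule measurable_cong[THEN iffD1, rotated]) (simp add: ind_sum)
qed

lemma lip1_meas:
  assumes f: "lip1 m f" and m: "m \<ge> 1"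
  shows "f \<in> borel_measurable (Omega_borel m)"
proof (rule borel_measurable_LIMSEQ_real)
  fix L show "(\<lambda>x. f (rep (map x [0..<L]))) \<in> borel_measurable (Omega_borel m)"
    by (rule pre_meas)
next
  fix x assume "x \<in> space (Omega_borel m)"
  then have x: "x \<in> Omega m" by simp
  have b: "norm (f (rep (map x [0..<L])) - f x) \<le> (1/2)^L" for L
  proof -
    have "rep (map x [0..<L]) \<in> Omega m"
      using x by (intro rep_Omega m) (auto simp: Omega_def)
    then have "\<bar>f (rep (map x [0..<L])) - f x\<bar> \<le> d_Omega (rep (map x [0..<L])) x"
      using f x unfolding lip1_def by blast
    also have "\<dots> \<le> (1/2)^L" by (rule d_agree) (simp add: rep_def)
    finally show ?thesis by simp
  qed
  have "(\<lambda>L. f (rep (map x [0..<L])) - f x) \<longlonglongrightarrow> 0"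
    by (rule Lim_null_comparison[OF always_eventually[OF allI[OF b]]]) (rule LIMSEQ_power_zero, simp)
  then show "(\<lambda>L. f (rep (map x [0..<L]))) \<longlonglongrightarrow> f x"
    by (simp add: LIM_zero_iff)
qed

lemma int_bound:
  fixes h :: "'a \<Rightarrow> real" and B :: real
  assumes "prob_space M" "h \<in> borel_measurable M" "\<And>x. x \<in> space M \<Longrightarrow> \<bar>h x\<bar> \<le> B"
  shows "\<bar>integral\<^sup>L M h\<bar> \<le> B"
proof -
  interpret prob_space M by fact
  have i: "integrable M h"
    using assms by (intro integrable_const_bound[where B=B]) auto
  have "integral\<^sup>L M h \<le> B" using i assms(3) by (intro integral_le_const) (auto simp: abs_le_iff)
  moreover have "integral\<^sup>L M (\<lambda>x. - h x) \<le> B" using i assms(3)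
    by (intro integral_le_const) (auto simp: abs_le_iff)
  ultimately show ?thesis by simp
qed

lemma nu_int:
  assumes "prob_space \<nu>" "sets \<nu> = sets (Omega_borel m)"
  shows "(\<integral>x. F (map x [0..<L]) \<partial>\<nu>) = (\<Sum>w\<in>Wd m L. F w * measure \<nu> (cyl m w))"
proof -
  interpret prob_space \<nu> by fact
  have sp: "space \<nu> = Omega m" using sets_eq_imp_space_eq[OF assms(2)] by simp
  have cs: "cyl m w \<in> sets \<nu>" for w using cyl_sets assms(2) by simp
  have ci: "cyl m w \<inter> Omega m = cyl m w" for w by (auto simp: cyl_def)
  have ii: "integrable \<nu> (indicator (cyl m w) :: _ \<Rightarrow> real)" for w
    using cs[of w] by (intro integrable_real_indicator) (auto simp: less_top[symmetric])
  have "(\<integral>x. F (map x [0..<L]) \<partial>\<nu>) = (\<integral>x. (\<Sum>w\<in>Wd m L. F w * indicator (cyl m w) x) \<partial>\<nu>)"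
    by (rule Bochner_Integration.integral_cong) (auto simp: sp ind_sum)
  also have "\<dots> = (\<Sum>w\<in>Wd m L. F w * measure \<nu> (cyl m w))"
    using cs ii by (subst Bochner_Integration.integral_sum) (auto simp: sp ci)
  finally show ?thesis .
qed

lemma nu_sum1:
  assumes "prob_space \<nu>" "sets \<nu> = sets (Omega_borel m)"
  shows "(\<Sum>w\<in>Wd m L. measure \<nu> (cyl m w)) = 1"
proof -
  interpret prob_space \<nu> by fact
  show ?thesis using nu_int[OF assms, of "\<lambda>_. 1" L] prob_space by simp
qed



lemma sum_est:
  fixes a b F :: "'a \<Rightarrow> real"
  assumes "finite W" "(\<Sum>w\<in>W. a w) = 1" "(\<Sum>w\<in>W. b w) = 1" "\<And>w. w \<in> W \<Longrightarrow> \<bar>F w - c\<bar> \<le> 1"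
  shows "(\<Sum>w\<in>W. a w * F w) - (\<Sum>w\<in>W. b w * F w) \<le> (\<Sum>w\<in>W. \<bar>a w - b w\<bar>)"
proof -
  have "(\<Sum>w\<in>W. (a w - b w) * (F w - c)) = (\<Sum>w\<in>W. a w * F w) - (\<Sum>w\<in>W. b w * F w) - c * ((\<Sum>w\<in>W. a w) - (\<Sum>w\<in>W. b w))"
    by (simp add: left_diff_distrib right_diff_distrib sum_subtractf sum_distrib_left mult.commute)
  then have e: "(\<Sum>w\<in>W. a w * F w) - (\<Sum>w\<in>W. b w * F w) = (\<Sum>w\<in>W. (a w - b w) * (F w - c))"
    using assms by simp
  have "(\<Sum>w\<in>W. (a w - b w) * (F w - c)) \<le> (\<Sum>w\<in>W. \<bar>a w - b w\<bar>)"
  proof (rule sum_mono)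
    fix w assume "w \<in> W"
    then have "\<bar>F w - c\<bar> \<le> 1" by (rule assms)
    then have "\<bar>(a w - b w) * (F w - c)\<bar> \<le> \<bar>a w - b w\<bar> * 1"
      unfolding abs_mult by (intro mult_left_mono) auto
    then show "(a w - b w) * (F w - c) \<le> \<bar>a w - b w\<bar>" by simp
  qed
  then show ?thesis using e by simp
qed

lemma x0_Omega: "m \<ge> 1 \<Longrightarrow> (\<lambda>_. 1) \<in> Omega m" by (simp add: Omega_def)

lemma fg_close:
  assumes m: "m \<ge> 1" and f: "lip1 m f" and P: "prob_space \<rho>" and S: "sets \<rho> = sets (Omega_borel m)"
  shows "\<bar>(\<integral>x. f x \<partial>\<rho>) - (\<integral>x. f (rep (map x [0..<L])) \<partial>\<rho>)\<bar> \<le> (1/2)^L"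
proof -
  interpret prob_space \<rho> by fact
  have sp: "space \<rho> = Omega m" using sets_eq_imp_space_eq[OF S] by simp
  have fm: "f \<in> borel_measurable \<rho>"
    by (subst measurable_cong_sets[OF S refl]) (rule lip1_meas[OF f m])
  have gm: "(\<lambda>x. f (rep (map x [0..<L]))) \<in> borel_measurable \<rho>"
    by (subst measurable_cong_sets[OF S refl]) (rule pre_meas)
  have repO: "rep (map x [0..<L]) \<in> Omega m" if "x \<in> Omega m" for x
    using that by (intro rep_Omega m) (auto simp: Omega_def)
  have fb: "\<bar>f x\<bar> \<le> \<bar>f (\<lambda>_. 1)\<bar> + 1" if "x \<in> Omega m" for x
  proof -
    have "\<bar>f x - f (\<lambda>_. 1)\<bar> \<le> d_Omega x (\<lambda>_. 1)"
      using f that x0_Omega[OF m] unfolding lip1_def by blast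
    then show ?thesis using d_le1[of x "\<lambda>_. 1"] by linarith
  qed
  have fi: "integrable \<rho> f"
    using fb fm by (intro integrable_const_bound[where B="\<bar>f (\<lambda>_. 1)\<bar> + 1"]) (auto simp: sp)
  have gi: "integrable \<rho> (\<lambda>x. f (rep (map x [0..<L])))"
    using fb repO gm by (intro integrable_const_bound[where B="\<bar>f (\<lambda>_. 1)\<bar> + 1"]) (auto simp: sp)
  have "(\<integral>x. f x \<partial>\<rho>) - (\<integral>x. f (rep (map x [0..<L])) \<partial>\<rho>) = (\<integral>x. f x - f (rep (map x [0..<L])) \<partial>\<rho>)"
    using fi gi by (rule Bochner_Integration.integral_diff[symmetric])
  also have "\<bar>\<dots>\<bar> \<le> (1/2)^L"
  proof (rule int_bound[OF P])
    show "(\<lambda>x. f x - f (rep (map x [0..<L]))) \<in> borel_measurable \<rho>" using fm gm by simp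
    fix x assume "x \<in> space \<rho>"
    then have x: "x \<in> Omega m" by (simp add: sp)
    have "\<bar>f x - f (rep (map x [0..<L]))\<bar> \<le> d_Omega x (rep (map x [0..<L]))"
      using f x repO[OF x] unfolding lip1_def by blast
    also have "\<dots> \<le> (1/2)^L" by (rule d_agree) (simp add: rep_def)
    finally show "\<bar>f x - f (rep (map x [0..<L]))\<bar> \<le> (1/2)^L" .
  qed
  finally show ?thesis .
qed

lemma key:
  assumes m: "m \<ge> 1" and f: "lip1 m f"
    and Pn: "prob_space \<nu>" and Sn: "sets \<nu> = sets (Omega_borel m)"
    and Pr: "prob_space \<rho>" and Sr: "sets \<rho> = sets (Omega_borel m)"
    and ir: "(\<integral>x. f (rep (map x [0..<L])) \<partial>\<rho>) = (\<Sum>w\<in>Wd m L. a w * f (rep w))"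
    and a1: "(\<Sum>w\<in>Wd m L. a w) = 1"
    and ae: "(\<Sum>w\<in>Wd m L. \<bar>a w - measure \<nu> (cyl m w)\<bar>) \<le> \<epsilon>"
  shows "(\<integral>x. f x \<partial>\<rho>) - (\<integral>x. f x \<partial>\<nu>) \<le> 2 * (1/2)^L + \<epsilon>"
proof -
  have c1: "\<bar>(\<integral>x. f x \<partial>\<rho>) - (\<integral>x. f (rep (map x [0..<L])) \<partial>\<rho>)\<bar> \<le> (1/2)^L"
    by (rule fg_close[OF m f Pr Sr])
  have c2: "\<bar>(\<integral>x. f x \<partial>\<nu>) - (\<integral>x. f (rep (map x [0..<L])) \<partial>\<nu>)\<bar> \<le> (1/2)^L"
    by (rule fg_close[OF m f Pn Sn])
  have inu: "(\<integral>x. f (rep (map x [0..<L])) \<partial>\<nu>) = (\<Sum>w\<in>Wd m L. measure \<nu> (cyl m w) * f (rep w))"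
    using nu_int[OF Pn Sn, of "\<lambda>w. f (rep w)" L] by (simp add: mult.commute)
  have "(\<Sum>w\<in>Wd m L. a w * f (rep w)) - (\<Sum>w\<in>Wd m L. measure \<nu> (cyl m w) * f (rep w))
        \<le> (\<Sum>w\<in>Wd m L. \<bar>a w - measure \<nu> (cyl m w)\<bar>)"
  proof (rule sum_est[OF finite_Wd a1 nu_sum1[OF Pn Sn]])
    fix w assume "w \<in> Wd m L"
    then have "rep w \<in> Omega m" by (intro rep_Omega m) (auto simp: Wd_def)
    then have "\<bar>f (rep w) - f (\<lambda>_. 1)\<bar> \<le> d_Omega (rep w) (\<lambda>_. 1)"
      using f x0_Omega[OF m] unfolding lip1_def by blast
    then show "\<bar>f (rep w) - f (\<lambda>_. 1)\<bar> \<le> 1" using d_le1[of "rep w" "\<lambda>_. 1"] by linarith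
  qed
  then show ?thesis using c1 c2 ir inu ae by (simp add: abs_le_iff)
qed



definition tgt :: "nat \<Rightarrow> nat list list" where
  "tgt k = from_nat (fst (prod_decode k))"

definition Pk :: "nat \<Rightarrow> nat list pmf" where
  "Pk k = (if tgt k = [] then return_pmf [] else pmf_of_multiset (mset (tgt k)))"

definition clamp :: "nat \<Rightarrow> nat \<Rightarrow> nat" where
  "clamp m a = (if a \<in> {1..m} then a else 1)"

definition Xs :: "nat \<Rightarrow> (nat \<Rightarrow> nat list) \<Rightarrow> nat \<Rightarrow> nat" where
  "Xs m \<omega> i = (if i = 0 then 1 else clamp m (\<omega> (floor_log i) ! (i - 2 ^ floor_log i)))"

definition MM :: "(nat \<Rightarrow> nat list) measure" where
  "MM = PiM UNIV (\<lambda>k. measure_pmf (Pk k))"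

definition mu :: "nat \<Rightarrow> (nat \<Rightarrow> nat) measure" where
  "mu m = distr MM (Omega_borel m) (Xs m)"

lemma MM_prob: "prob_space MM"
  unfolding MM_def by (intro prob_space_PiM prob_space_measure_pmf)

lemma Xs_Omega: "m \<ge> 1 \<Longrightarrow> Xs m \<omega> \<in> Omega m"
  by (auto simp: Xs_def Omega_def clamp_def)

lemma funpow_shift: "(shift ^^ n) x = (\<lambda>i. x (n + i))"
  by (induction n arbitrary: x) (auto simp: shift_def)

lemma Y_meas:
  assumes m: "m \<ge> 1"
  shows "(\<lambda>\<omega>. (shift ^^ n) (Xs m \<omega>)) \<in> measurable MM (Omega_borel m)"
proof (rule meas_crit)
  show "(\<lambda>\<omega>. (shift ^^ n) (Xs m \<omega>)) \<in> space MM \<rightarrow> Omega m"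
    using Xs_Omega[OF m] by (auto simp: funpow_shift Omega_def)
  fix i a
  let ?j = "n + i"
  let ?h = "\<lambda>u::nat list. if ?j = 0 then 1 else clamp m (u ! (?j - 2 ^ floor_log ?j))"
  have "(\<lambda>\<omega>. ?h (\<omega> (floor_log ?j))) \<in> measurable MM (count_space UNIV)"
    unfolding MM_def
    by (rule measurable_compose[OF measurable_component_singleton[of "floor_log ?j" UNIV]]) auto
  then have "(\<lambda>\<omega>. ?h (\<omega> (floor_log ?j))) -` {a} \<inter> space MM \<in> sets MM"
    by (rule measurable_sets) simp
  moreover have "(\<lambda>\<omega>. ?h (\<omega> (floor_log ?j))) -` {a} \<inter> space MM =
     {\<omega> \<in> space MM. (shift ^^ n) (Xs m \<omega>) i = a}"
    by (auto simp: funpow_shift Xs_def)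
  ultimately show "{\<omega> \<in> space MM. (shift ^^ n) (Xs m \<omega>) i = a} \<in> sets MM" by simp
qed

lemma Tn:
  assumes m: "m \<ge> 1"
  shows "(T_push m ^^ n) (mu m) = distr MM (Omega_borel m) (\<lambda>\<omega>. (shift ^^ n) (Xs m \<omega>))"
proof (induction n)
  case 0 then show ?case by (simp add: mu_def)
next
  case (Suc n)
  have "(T_push m ^^ Suc n) (mu m) = T_push m ((T_push m ^^ n) (mu m))" by simp
  also have "\<dots> = T_push m (distr MM (Omega_borel m) (\<lambda>\<omega>. (shift ^^ n) (Xs m \<omega>)))"
    by (simp only: Suc.IH)
  also have "\<dots> = distr (distr MM (Omega_borel m) (\<lambda>\<omega>. (shift ^^ n) (Xs m \<omega>))) (Omega_borel m) shift"
    by (simp add: T_push_def)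
  also have "\<dots> = distr MM (Omega_borel m) (shift \<circ> (\<lambda>\<omega>. (shift ^^ n) (Xs m \<omega>)))"
    by (rule distr_distr[OF shift_meas Y_meas[OF m]])
  also have "shift \<circ> (\<lambda>\<omega>. (shift ^^ n) (Xs m \<omega>)) = (\<lambda>\<omega>. (shift ^^ Suc n) (Xs m \<omega>))"
    by auto
  finally show ?case .
qed

lemma floor_log_block:
  assumes r: "r < 2 ^ k"
  shows "floor_log (2 ^ k + r) = k"
proof -
  let ?n = "2 ^ k + r"
  have n0: "?n \<noteq> 0" by simp
  have a: "2 ^ floor_log ?n \<le> ?n" by (rule floor_log_exp2_le) simp
  have b: "?n < 2 * 2 ^ floor_log ?n" by (rule floor_log_exp2_gt)
  have "(2::nat) ^ floor_log ?n < 2 ^ Suc k" using a r by simp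
  then have "floor_log ?n < Suc k" by (rule power_less_imp_less_exp[rotated]) simp
  moreover have "(2::nat) ^ k < 2 ^ Suc (floor_log ?n)" using b by simp
  then have "k < Suc (floor_log ?n)" by (rule power_less_imp_less_exp[rotated]) simp
  ultimately show ?thesis by simp
qed

lemma shift_block:
  assumes "r < 2 ^ k"
  shows "(shift ^^ (2 ^ k)) (Xs m \<omega>) r = clamp m (\<omega> k ! r)"
  using assms floor_log_block[OF assms] by (simp add: funpow_shift Xs_def)

lemma comp_int:
  fixes h :: "nat list \<Rightarrow> real"
  shows "(\<integral>\<omega>. h (\<omega> k) \<partial>MM) = (\<integral>u. h u \<partial>measure_pmf (Pk k))"
proof -
  have "distr MM (measure_pmf (Pk k)) (\<lambda>\<omega>. \<omega> k) = measure_pmf (Pk k)"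
    unfolding MM_def by (rule distr_PiM_component) (auto intro: prob_space_measure_pmf)
  then have "(\<integral>u. h u \<partial>measure_pmf (Pk k)) = (\<integral>u. h u \<partial>distr MM (measure_pmf (Pk k)) (\<lambda>\<omega>. \<omega> k))"
    by simp
  also have "\<dots> = (\<integral>\<omega>. h (\<omega> k) \<partial>MM)"
    by (rule integral_distr) (auto simp: MM_def)
  finally show ?thesis by simp
qed

lemma clamp_Wd:
  assumes "w \<in> Wd m L"
  shows "map (\<lambda>r. clamp m (w ! r)) [0..<L] = w"
proof (rule nth_equalityI)
  show "length (map (\<lambda>r. clamp m (w ! r)) [0..<L]) = length w" using assms by (simp add: Wd_def)
  fix i assume "i < length (map (\<lambda>r. clamp m (w ! r)) [0..<L])"
  then have i: "i < L" "i < length w" using assms by (auto simp: Wd_def)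
  then have "w ! i \<in> set w" by simp
  then have "w ! i \<in> {1..m}" using assms by (auto simp: Wd_def)
  then show "map (\<lambda>r. clamp m (w ! r)) [0..<L] ! i = w ! i" using i by (simp add: clamp_def)
qed

lemma mu_int:
  assumes m: "m \<ge> 1" and L: "L \<le> 2 ^ k" and ne: "tgt k \<noteq> []" and sub: "set (tgt k) \<subseteq> Wd m L"
  shows "(\<integral>x. F (rep (map x [0..<L])) \<partial>(T_push m ^^ (2 ^ k)) (mu m)) =
         (\<Sum>w\<in>Wd m L. pmf (Pk k) w * (F (rep w) :: real))"
proof -
  have "(\<integral>x. F (rep (map x [0..<L])) \<partial>(T_push m ^^ (2 ^ k)) (mu m)) =
        (\<integral>\<omega>. F (rep (map ((shift ^^ (2 ^ k)) (Xs m \<omega>)) [0..<L])) \<partial>MM)"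
    unfolding Tn[OF m] by (rule integral_distr[OF Y_meas[OF m] pre_meas])
  also have "\<dots> = (\<integral>\<omega>. F (rep (map (\<lambda>r. clamp m (\<omega> k ! r)) [0..<L])) \<partial>MM)"
  proof -
    have "map ((shift ^^ (2 ^ k)) (Xs m \<omega>)) [0..<L] = map (\<lambda>r. clamp m (\<omega> k ! r)) [0..<L]" for \<omega>
      using L by (intro map_cong refl shift_block) auto
    then show ?thesis by (simp only:)
  qed
  also have "\<dots> = (\<integral>u. F (rep (map (\<lambda>r. clamp m (u ! r)) [0..<L])) \<partial>measure_pmf (Pk k))"
    by (rule comp_int)
  also have "\<dots> = (\<Sum>w\<in>Wd m L. pmf (Pk k) w *\<^sub>R F (rep (map (\<lambda>r. clamp m (w ! r)) [0..<L])))"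
    using sub ne by (intro integral_measure_pmf finite_Wd) (auto simp: Pk_def)
  also have "\<dots> = (\<Sum>w\<in>Wd m L. pmf (Pk k) w * F (rep w))"
    by (intro sum.cong refl) (simp add: clamp_Wd)
  finally show ?thesis .
qed



lemma count_list_replicate: "count_list (replicate n x) w = (if w = x then n else 0)"
  by (induction n) auto

lemma mk_list:
  assumes "finite W"
  shows "\<exists>ws. set ws \<subseteq> W \<and> (\<forall>w\<in>W. count_list ws w = c w) \<and> length ws = (\<Sum>w\<in>W. c w)"
  using assms
proof (induction W rule: finite_induct)
  case empty then show ?case by simp
next
  case (insert x F)
  then obtain ws where ws: "set ws \<subseteq> F" "\<forall>w\<in>F. count_list ws w = c w" "length ws = (\<Sum>w\<in>F. c w)"
    by blast
  have "x \<notin> set ws" using ws(1) insert(2) by blast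
  then show ?case using ws insert(1,2)
    by (intro exI[of _ "replicate (c x) x @ ws"]) (auto simp: count_list_replicate)
qed

lemma approx:
  fixes p :: "'a \<Rightarrow> real"
  assumes W: "finite W" "W \<noteq> {}" and p0: "\<And>w. w \<in> W \<Longrightarrow> p w \<ge> 0" and p1: "(\<Sum>w\<in>W. p w) = 1"
    and e: "\<epsilon> > 0"
  shows "\<exists>c::'a \<Rightarrow> nat. 0 < (\<Sum>w\<in>W. c w) \<and>
           (\<Sum>w\<in>W. \<bar>real (c w) / real (\<Sum>w\<in>W. c w) - p w\<bar>) \<le> \<epsilon>"
proof -
  define N where "N = real (card W)"
  have N1: "N \<ge> 1" using W by (simp add: N_def Suc_le_eq card_gt_0_iff)
  obtain K :: nat where K: "max (2 * N / \<epsilon>) N < real K" using reals_Archimedean2 by blast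
  have KN: "real K > N" and K2: "real K > 2 * N / \<epsilon>" using K by auto
  have Kpos: "real K > 0" using KN N1 by linarith
  define c where "c w = nat \<lfloor>real K * p w\<rfloor>" for w
  define cr where "cr w = real (c w)" for w
  have cr_eq: "cr w = of_int \<lfloor>real K * p w\<rfloor>" if "w \<in> W" for w
    using p0[OF that] Kpos by (simp add: cr_def c_def)
  have cr_le: "cr w \<le> real K * p w" if "w \<in> W" for w using cr_eq[OF that] by simp
  have cr_gt: "real K * p w - 1 < cr w" if "w \<in> W" for w using cr_eq[OF that] by linarith
  have cr0: "cr w \<ge> 0" for w by (simp add: cr_def)
  define Sr where "Sr = (\<Sum>w\<in>W. cr w)"
  have Sr_eq: "Sr = real (\<Sum>w\<in>W. c w)" by (simp add: Sr_def cr_def)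
  have SK: "Sr \<le> real K"
  proof -
    have "Sr \<le> (\<Sum>w\<in>W. real K * p w)" unfolding Sr_def by (intro sum_mono cr_le)
    also have "\<dots> = real K" using p1 by (simp add: sum_distrib_left[symmetric])
    finally show ?thesis .
  qed
  have SKN: "real K - N < Sr"
  proof -
    have "(\<Sum>w\<in>W. real K * p w - 1) < Sr" unfolding Sr_def
      using W by (intro sum_strict_mono cr_gt) auto
    moreover have "(\<Sum>w\<in>W. real K * p w - 1) = real K - N"
      using p1 by (simp add: sum_subtractf sum_distrib_left[symmetric] N_def)
    ultimately show ?thesis by simp
  qed
  have Spos: "Sr > 0" using SKN KN by linarith
  have trm: "\<bar>cr w / Sr - p w\<bar> \<le> (cr w / Sr - cr w / real K) + (p w - cr w / real K)" if "w \<in> W" for w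
  proof -
    have x: "cr w / Sr - cr w / real K \<ge> 0"
      using SK Spos cr0[of w] by (simp add: divide_left_mono)
    have y: "p w - cr w / real K \<ge> 0"
      using cr_le[OF that] Kpos by (simp add: divide_le_eq mult.commute)
    show ?thesis using x y by linarith
  qed
  have "(\<Sum>w\<in>W. \<bar>cr w / Sr - p w\<bar>) \<le> (\<Sum>w\<in>W. (cr w / Sr - cr w / real K) + (p w - cr w / real K))"
    by (intro sum_mono trm)
  also have "\<dots> = Sr / Sr - 2 * (Sr / real K) + 1"
    using p1 by (simp add: sum.distrib sum_subtractf sum_divide_distrib[symmetric] sum_distrib_left[symmetric] Sr_def)
  also have "\<dots> = 2 * (real K - Sr) / real K"
    using Spos Kpos by (simp add: field_simps)
  also have "\<dots> \<le> 2 * N / real K"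
    using SKN Kpos by (intro divide_right_mono) auto
  also have "\<dots> \<le> \<epsilon>"
    using K2 e Kpos N1 by (simp add: field_simps)
  finally have "(\<Sum>w\<in>W. \<bar>cr w / Sr - p w\<bar>) \<le> \<epsilon>" .
  moreover have "0 < (\<Sum>w\<in>W. c w)" using Spos Sr_eq by (simp only: of_nat_0_less_iff)
  ultimately show ?thesis unfolding cr_def Sr_eq by blast
qed



theorem corollary2p9:
  fixes m :: nat
  assumes "m \<ge> 1"
  shows "\<exists>\<mu>\<in>Prob_Omega m. \<forall>\<nu>\<in>Prob_Omega m. \<forall>e>0.
           \<exists>n. d_MK m ((T_push m ^^ n) \<mu>) \<nu> < e"
proof (intro bexI[of _ "mu m"] ballI allI impI)
  note m = assms
  interpret MMp: prob_space MM by (rule MM_prob)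
  have Pr: "prob_space ((T_push m ^^ n) (mu m))" and Sr: "sets ((T_push m ^^ n) (mu m)) = sets (Omega_borel m)" for n
    unfolding Tn[OF m] by (auto intro!: MMp.prob_space_distr Y_meas[OF m])
  show "mu m \<in> Prob_Omega m" using Pr[of 0] Sr[of 0] by (simp add: Prob_Omega_def)
  fix \<nu> and e :: real assume nu: "\<nu> \<in> Prob_Omega m" and e: "e > 0"
  have Pn: "prob_space \<nu>" and Sn: "sets \<nu> = sets (Omega_borel m)" using nu by (auto simp: Prob_Omega_def)
  obtain L where L: "(1/2::real)^L < e/4" using real_arch_pow_inv[of "e/4" "1/2"] e by auto
  let ?W = "Wd m L"
  have Wne: "?W \<noteq> {}"
  proof -
    have "replicate L 1 \<in> ?W" using m by (auto simp: Wd_def)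
    then show ?thesis by blast
  qed
  obtain c :: "nat list \<Rightarrow> nat" where c: "0 < (\<Sum>w\<in>?W. c w)"
    "(\<Sum>w\<in>?W. \<bar>real (c w) / real (\<Sum>w\<in>?W. c w) - measure \<nu> (cyl m w)\<bar>) \<le> e/4"
    using approx[OF finite_Wd Wne _ nu_sum1[OF Pn Sn], of "e/4"] e by auto
  obtain ws where ws: "set ws \<subseteq> ?W" "\<forall>w\<in>?W. count_list ws w = c w" "length ws = (\<Sum>w\<in>?W. c w)"
    using mk_list[OF finite_Wd] by blast
  have wsne: "ws \<noteq> []" using ws(3) c(1) by auto
  define k where "k = prod_encode (to_nat ws, L)"
  have tk: "tgt k = ws" by (simp add: tgt_def k_def)
  have Lk: "L \<le> 2 ^ k"
  proof -
    have "L \<le> k" unfolding k_def by (rule le_prod_encode_2)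
    also have "k \<le> 2 ^ k" using less_exp[of k] by simp
    finally show ?thesis .
  qed
  have pmfk: "pmf (Pk k) w = real (c w) / real (\<Sum>w\<in>?W. c w)" if "w \<in> ?W" for w
    using that ws wsne by (simp add: Pk_def tk count_mset)
  let ?\<rho> = "(T_push m ^^ (2 ^ k)) (mu m)"
  have a1: "(\<Sum>w\<in>?W. pmf (Pk k) w) = 1"
  proof -
    interpret prob_space ?\<rho> by (rule Pr)
    show ?thesis using mu_int[OF m Lk, of "\<lambda>_. 1"] tk wsne ws(1) prob_space by simp
  qed
  have bound: "s \<le> 2 * (1/2)^L + e/4" if hs: "s \<in> {(\<integral>x. f x \<partial>?\<rho>) - (\<integral>x. f x \<partial>\<nu>) | f. lip1 m f}" for s
  proof -
    obtain f where f: "lip1 m f" and s: "s = (\<integral>x. f x \<partial>?\<rho>) - (\<integral>x. f x \<partial>\<nu>)" using hs by blast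
    have ae: "(\<Sum>w\<in>?W. \<bar>pmf (Pk k) w - measure \<nu> (cyl m w)\<bar>) \<le> e/4"
      using c(2) by (simp add: pmfk)
    show ?thesis unfolding s
      by (rule key[OF m f Pn Sn Pr Sr mu_int[OF m Lk] a1 ae]) (use tk wsne ws(1) in auto)
  qed
  have ne: "{(\<integral>x. f x \<partial>?\<rho>) - (\<integral>x. f x \<partial>\<nu>) | f. lip1 m f} \<noteq> {}"
  proof -
    have "lip1 m (\<lambda>_. 0)" by (simp add: lip1_def d_nonneg)
    then show ?thesis by blast
  qed
  have "d_MK m ?\<rho> \<nu> \<le> 2 * (1/2)^L + e/4"
    unfolding d_MK_def by (rule cSup_least[OF ne bound])
  also have "\<dots> < e"
  proof -
    define t :: real where "t = (1/2)^L"
    have "t < e/4" using L by (simp add: t_def)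
    then have "2 * t + e/4 < e" using e by linarith
    then show ?thesis by (simp add: t_def)
  qed
  finally show "\<exists>n. d_MK m ((T_push m ^^ n) (mu m)) \<nu> < e" by blast
qed


end
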